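(* Let $\alpha\in(0,1)$ and $\delta>0$. For all $t,s\in\delta\mathbb Z\setminus\{0\}$, writing $t'=t-\frac\delta2\mathrm{sgn}(t)$ and $s'=s-\frac\delta2\mathrm{sgn}(s)$, $$\mathrm{Cov}\Big(\frac{\sqrt2B_\alpha(t')}{|t'|^{\alpha/2}},\frac{\sqrt2B_\alpha(s')}{|s'|^{\alpha/2}}\Big)\le\mathrm{Cov}\Big(\frac{\sqrt2B_\alpha(t)}{|t|^{\alpha/2}},\frac{\sqrt2B_\alpha(s)}{|s|^{\alpha/2}}\Big).$$
   Context: $B_\alpha$ is fractional Brownian motion with $\mathrm{Cov}(B_\alpha(t),B_\alpha(s))=\frac{|t|^\alpha+|s|^\alpha-|t-s|^\alpha}{2}$, $t,s\in\mathbb R$; $\mathrm{sgn}$ is the sign function. *)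

theory Defs
  imports "HOL-Probability.Probability"
begin

definition cov :: "'a measure \<Rightarrow> ('a \<Rightarrow> real) \<Rightarrow> ('a \<Rightarrow> real) \<Rightarrow> real" where
  "cov M X Y = (\<integral>x. (X x - (\<integral>y. X y \<partial>M)) * (Y x - (\<integral>y. Y y \<partial>M)) \<partial>M)"

text \<open>B is a (second-order) process whose covariance is that of fractional Brownian
  motion with parameter alpha (alpha = 2H).\<close>
definition is_fBm :: "'a measure \<Rightarrow> real \<Rightarrow> (real \<Rightarrow> 'a \<Rightarrow> real) \<Rightarrow> bool" where
  "is_fBm M \<alpha> B \<longleftrightarrow> prob_space M \<and>
     (\<forall>t. B t \<in> borel_measurable M \<and> integrable M (\<lambda>x. (B t x)\<^sup>2)) \<and>
     (\<forall>t s. cov M (B t) (B s) = (\<bar>t\<bar> powr \<alpha> + \<bar>s\<bar> powr \<alpha> - \<bar>t - s\<bar> powr \<alpha>) / 2)"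

end

theory Submission imports Defs begin

lemma E_nonneg:
  fixes a d :: real
  assumes a0: "0 < a" and a1: "a < 1" and d0: "0 \<le> d" and d1: "d \<le> 1/2"
  shows "(1/2+d) powr a - (1/2-d) powr a \<le> 2*d"
proof (cases "d = 1/2")
  case True
  show ?thesis unfolding True by simp
next
  case False
  with d1 have d1': "d < 1/2" by simp
  define E where "E x = 2*x - (1/2+x) powr a + (1/2-x) powr a" for x :: real
  define E1 where "E1 x = 2 - a*(1/2+x) powr (a-1) - a*(1/2-x) powr (a-1)" for x :: real
  define E2 where "E2 x = a*(a-1)*((1/2-x) powr (a-2) - (1/2+x) powr (a-2))" for x :: real
  have dE: "(E has_real_derivative E1 x) (at x)" if "-1/2 < x" "x < 1/2" for x
    unfolding E_def E1_def using that
    by (auto intro!: derivative_eq_intros simp: algebra_simps)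
  have dE1: "(E1 has_real_derivative E2 x) (at x)" if "-1/2 < x" "x < 1/2" for x
    unfolding E1_def E2_def using that
    by (auto intro!: derivative_eq_intros simp: algebra_simps)
  have E2le: "E2 x \<le> 0" if "0 \<le> x" "x < 1/2" for x
  proof -
    have "(1/2+x) powr (a-2) \<le> (1/2-x) powr (a-2)"
      using that a1 by (intro powr_mono2') auto
    then have h2: "0 \<le> (1/2-x) powr (a-2) - (1/2+x) powr (a-2)" by linarith
    have h1: "a*(a-1) \<le> 0" using a0 a1 by (simp add: mult_nonneg_nonpos)
    show ?thesis unfolding E2_def by (rule mult_nonpos_nonneg[OF h1 h2])
  qed
  have anti: "E1 y \<le> E1 x" if "0 \<le> x" "x \<le> y" "y < 1/2" for x y
    using that by (intro deriv_nonpos_imp_antimono[of x y E1 E2]) (use dE1 E2le in auto)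
  have "E 0 \<le> E d"
  proof (cases "\<forall>x\<in>{0..d}. 0 \<le> E1 x")
    case True
    show ?thesis
    proof (rule DERIV_nonneg_imp_nondecreasing[of 0 d E])
      show "0 \<le> d" using d0 .
      fix x assume x: "0 \<le> x" "x \<le> d"
      have "(E has_real_derivative E1 x) (at x)" using x d1' by (intro dE) linarith+
      moreover have "0 \<le> E1 x" using True x by auto
      ultimately show "\<exists>y. (E has_real_derivative y) (at x) \<and> 0 \<le> y" by blast
    qed
  next
    case False
    then obtain x0 where x0: "0 \<le> x0" "x0 \<le> d" "E1 x0 < 0" by auto
    have "E (1/2) \<le> E d"
    proof (rule DERIV_nonpos_imp_decreasing_open[of d "1/2" E])
      show "d \<le> 1/2" using d1 .
      show "\<exists>y. (E has_real_derivative y) (at x) \<and> y \<le> 0" if "d < x" "x < 1/2" for x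
      proof -
        have "(E has_real_derivative E1 x) (at x)" using that d0 by (intro dE) linarith+
        moreover have "E1 x \<le> E1 x0" using that x0 by (intro anti) linarith+
        ultimately show ?thesis using x0 by (intro exI[of _ "E1 x"]) simp
      qed
      show "continuous_on {d..1/2} E"
        unfolding E_def using a0 d0
        by (intro continuous_on_add continuous_on_diff continuous_on_powr' continuous_intros) auto
    qed
    moreover have "E 0 = E (1/2)" unfolding E_def using a0 by simp
    ultimately show ?thesis by simp
  qed
  moreover have "E 0 = 0" unfolding E_def by simp
  ultimately show ?thesis unfolding E_def by simp
qed

lemma K1:
  fixes a p q :: real
  assumes a0: "0 < a" and a1: "a < 1" and q0: "0 < q" and qp: "q \<le> p"
  shows "p powr a - q powr a \<le> (p - q) * (p + q) powr (a - 1)"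
proof -
  define S where "S = p + q"
  have S0: "0 < S" using q0 qp unfolding S_def by simp
  define d where "d = (p - q) / (2*S)"
  have d0: "0 \<le> d" using qp S0 unfolding d_def by simp
  have d1: "d \<le> 1/2" using q0 qp S0 unfolding d_def S_def by (simp add: field_simps)
  have e1: "1/2 + d = p / S" and e2: "1/2 - d = q / S"
    using S0 unfolding d_def S_def by (simp_all add: field_simps)
  have "(p/S) powr a - (q/S) powr a \<le> 2*d"
    using E_nonneg[OF a0 a1 d0 d1] unfolding e1 e2 .
  moreover have "2*d = (p - q) / S" unfolding d_def using S0 by (simp add: field_simps)
  ultimately have "p powr a / S powr a - q powr a / S powr a \<le> (p - q) / S"
    using S0 q0 qp by (simp add: powr_divide)
  then have "p powr a - q powr a \<le> (p - q) / S * S powr a"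
    using S0 by (simp add: field_simps)
  also have "(p - q) / S * S powr a = (p - q) * S powr (a - 1)"
    using S0 by (simp add: powr_diff)
  finally show ?thesis unfolding S_def .
qed

lemma K2:
  fixes a r :: real
  assumes a0: "0 < a" and a1: "a < 1" and r1: "1 < r"
  shows "r powr a - 1 \<le> (r + 1) * (r - 1) powr (a - 1)"
proof -
  have "r powr a - 1 powr a \<le> (r - 1) * (r + 1) powr (a - 1)"
    using K1[OF a0 a1, of 1 r] r1 by simp
  also have "\<dots> \<le> (r + 1) * (r - 1) powr (a - 1)"
  proof -
    define u where "u = r - 1"
    define v where "v = r + 1"
    have u0: "0 < u" and uv: "u \<le> v" using r1 unfolding u_def v_def by simp_all
    have uu: "u = u powr (2 - a) * u powr (a - 1)"
      using u0 by (simp add: powr_add[symmetric])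
    have vv: "v = v powr (2 - a) * v powr (a - 1)"
      using u0 uv by (simp add: powr_add[symmetric])
    have m: "u powr (2 - a) \<le> v powr (2 - a)"
      using u0 uv a1 by (intro powr_mono2) auto
    have "u * v powr (a - 1) = u powr (2 - a) * (u powr (a - 1) * v powr (a - 1))"
      by (subst uu) (simp add: ac_simps)
    also have "\<dots> \<le> v powr (2 - a) * (u powr (a - 1) * v powr (a - 1))"
      by (rule mult_right_mono[OF m]) simp
    also have "\<dots> = v * u powr (a - 1)"
      by (subst (2) vv) (simp add: ac_simps)
    finally show ?thesis unfolding u_def v_def .
  qed
  finally show ?thesis by simp
qed

definition phiO :: "real \<Rightarrow> real \<Rightarrow> real" where
  "phiO a r = (1 + r powr a - (1 + r) powr a) / r powr (a/2)"
definition phiS :: "real \<Rightarrow> real \<Rightarrow> real" where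
  "phiS a r = (1 + r powr a - (r - 1) powr a) / r powr (a/2)"

lemma phiO_deriv:
  fixes a r :: real
  assumes a0: "0 < a" and a1: "a < 1" and r1: "1 \<le> r"
  shows "\<exists>y. (phiO a has_real_derivative y) (at r) \<and> y \<le> 0"
proof -
  have r0: "0 < r" using r1 by simp
  define A where "A = r powr a"
  define B where "B = r powr (a/2)"
  define C where "C = (1 + r) powr (a - 1)"
  define y where "y = ((a * r powr (a-1) - a * (1+r) powr (a-1)) * r powr (a/2)
        - (1 + r powr a - (1+r) powr a) * (a/2 * r powr (a/2-1))) / (r powr (a/2))^2"
  have der: "(phiO a has_real_derivative y) (at r)"
    unfolding phiO_def[abs_def] y_def using r0
    by (auto intro!: derivative_eq_intros simp: power2_eq_square)
  have f1: "r powr (a-1) = A / r" unfolding A_def using r0 by (simp add: powr_diff)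
  have f2: "r powr (a/2-1) = B / r" unfolding B_def using r0 by (simp add: powr_diff)
  have f3: "(1+r) powr a = (1 + r) * C" unfolding C_def using r0
    by (simp add: powr_diff)
  have B0: "0 < B" unfolding B_def using r0 by simp
  have num: "(a * r powr (a-1) - a * (1+r) powr (a-1)) * r powr (a/2)
        - (1 + r powr a - (1+r) powr a) * (a/2 * r powr (a/2-1))
      = a * B / (2*r) * (A - 1 - (r - 1) * C)"
    unfolding f1 f2 f3 unfolding A_def[symmetric] B_def[symmetric] C_def[symmetric]
    using r0 by (simp add: field_simps)
  have k: "A - 1 - (r - 1) * C \<le> 0"
    using K1[OF a0 a1, of 1 r] r1 unfolding A_def C_def by (simp add: add.commute)
  have nn: "a * B / (2*r) * (A - 1 - (r - 1) * C) \<le> 0"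
    using a0 B0 r0 k by (intro mult_nonneg_nonpos) auto
  have "y \<le> 0" unfolding y_def num by (rule divide_nonpos_nonneg[OF nn]) simp
  with der show ?thesis by blast
qed

lemma phiS_deriv:
  fixes a r :: real
  assumes a0: "0 < a" and a1: "a < 1" and r1: "1 < r"
  shows "\<exists>y. (phiS a has_real_derivative y) (at r) \<and> y \<le> 0"
proof -
  have r0: "0 < r" using r1 by simp
  define A where "A = r powr a"
  define B where "B = r powr (a/2)"
  define C where "C = (r - 1) powr (a - 1)"
  define y where "y = ((a * r powr (a-1) - a * (r - 1) powr (a-1)) * r powr (a/2)
        - (1 + r powr a - (r - 1) powr a) * (a/2 * r powr (a/2-1))) / (r powr (a/2))^2"
  have der: "(phiS a has_real_derivative y) (at r)"
    unfolding phiS_def[abs_def] y_def using r1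
    by (auto intro!: derivative_eq_intros simp: power2_eq_square)
  have f1: "r powr (a-1) = A / r" unfolding A_def using r0 by (simp add: powr_diff)
  have f2: "r powr (a/2-1) = B / r" unfolding B_def using r0 by (simp add: powr_diff)
  have f3: "(r - 1) powr a = (r - 1) * C" unfolding C_def using r1
    by (simp add: powr_diff)
  have B0: "0 < B" unfolding B_def using r0 by simp
  have num: "(a * r powr (a-1) - a * (r - 1) powr (a-1)) * r powr (a/2)
        - (1 + r powr a - (r - 1) powr a) * (a/2 * r powr (a/2-1))
      = a * B / (2*r) * (A - 1 - (r + 1) * C)"
    unfolding f1 f2 f3 unfolding A_def[symmetric] B_def[symmetric] C_def[symmetric]
    using r0 by (simp add: field_simps)
  have k: "A - 1 - (r + 1) * C \<le> 0"
    using K2[OF a0 a1 r1] unfolding A_def C_def by simp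
  have nn: "a * B / (2*r) * (A - 1 - (r + 1) * C) \<le> 0"
    using a0 B0 r0 k by (intro mult_nonneg_nonpos) auto
  have "y \<le> 0" unfolding y_def num by (rule divide_nonpos_nonneg[OF nn]) simp
  with der show ?thesis by blast
qed

lemma phiO_mono:
  fixes a r r' :: real
  assumes a0: "0 < a" and a1: "a < 1" and r1: "1 \<le> r" and rr: "r \<le> r'"
  shows "phiO a r' \<le> phiO a r"
  using rr by (rule DERIV_nonpos_imp_nonincreasing) (rule phiO_deriv[OF a0 a1], use r1 in linarith)

lemma phiS_mono:
  fixes a r r' :: real
  assumes a0: "0 < a" and a1: "a < 1" and r1: "1 < r" and rr: "r \<le> r'"
  shows "phiS a r' \<le> phiS a r"
  using rr by (rule DERIV_nonpos_imp_nonincreasing) (rule phiS_deriv[OF a0 a1], use r1 in linarith)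

definition GO :: "real \<Rightarrow> real \<Rightarrow> real \<Rightarrow> real" where
  "GO a x y = (x powr a + y powr a - (x + y) powr a) / (x powr (a/2) * y powr (a/2))"
definition GS :: "real \<Rightarrow> real \<Rightarrow> real \<Rightarrow> real" where
  "GS a x y = (x powr a + y powr a - \<bar>x - y\<bar> powr a) / (x powr (a/2) * y powr (a/2))"

lemma GO_sym: "GO a x y = GO a y x"
  unfolding GO_def by (simp add: ac_simps)
lemma GS_sym: "GS a x y = GS a y x"
  unfolding GS_def by (simp add: ac_simps abs_minus_commute)

lemma xa: "0 < x \<Longrightarrow> x powr (a/2) * x powr (a/2) = x powr (a::real)"
  for x :: real by (simp add: powr_add[symmetric])

lemma GO_phi:
  fixes a x y :: real
  assumes x0: "0 < x" and xy: "x \<le> y"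
  shows "GO a x y = phiO a (y / x)"
proof -
  define r where "r = y / x"
  have y: "y = x * r" unfolding r_def using x0 by simp
  have r0: "0 < r" unfolding r_def using x0 xy by simp
  have "GO a x y = (x powr a * (1 + r powr a - (1 + r) powr a)) / (x powr a * r powr (a/2))"
  proof -
    have e: "x + x * r = x * (1 + r)" by (simp add: algebra_simps)
    have n: "x powr a + (x*r) powr a - (x + x*r) powr a = x powr a * (1 + r powr a - (1+r) powr a)"
      unfolding e using x0 r0 powr_mult[of x r a] powr_mult[of x "1+r" a] by (simp add: algebra_simps)
    have d: "x powr (a/2) * (x*r) powr (a/2) = x powr a * r powr (a/2)"
      using x0 r0 xa[OF x0, of a] by (simp add: powr_mult mult.assoc[symmetric])
    show ?thesis unfolding GO_def y n d ..
  qed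
  also have "\<dots> = phiO a r" unfolding phiO_def using x0 by simp
  finally show ?thesis unfolding r_def .
qed

lemma GS_phi:
  fixes a x y :: real
  assumes x0: "0 < x" and xy: "x \<le> y"
  shows "GS a x y = phiS a (y / x)"
proof -
  define r where "r = y / x"
  have y: "y = x * r" unfolding r_def using x0 by simp
  have r1: "1 \<le> r" unfolding r_def using x0 xy by simp
  have ab: "\<bar>x - x * r\<bar> = x * (r - 1)" using x0 r1 by (simp add: algebra_simps)
  have "GS a x y = (x powr a * (1 + r powr a - (r - 1) powr a)) / (x powr a * r powr (a/2))"
  proof -
    have n: "x powr a + (x*r) powr a - (x * (r - 1)) powr a = x powr a * (1 + r powr a - (r - 1) powr a)"
      using x0 r1 powr_mult[of x r a] powr_mult[of x "r - 1" a] by (simp add: algebra_simps)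
    have d: "x powr (a/2) * (x*r) powr (a/2) = x powr a * r powr (a/2)"
      using x0 r1 xa[OF x0, of a] by (simp add: powr_mult mult.assoc[symmetric])
    show ?thesis unfolding GS_def y ab n d ..
  qed
  also have "\<dots> = phiS a r" unfolding phiS_def using x0 by simp
  finally show ?thesis unfolding r_def .
qed

lemma ratio_le:
  fixes c x y :: real
  assumes "0 < c" "c < x" "x \<le> y"
  shows "1 \<le> y / x" "y / x \<le> (y - c) / (x - c)"
  using assms by (simp_all add: field_simps mult_left_mono)

lemma GO_shift1:
  fixes a c x y :: real
  assumes a0: "0 < a" and a1: "a < 1" and c0: "0 < c" and cx: "c < x" and xy: "x \<le> y"
  shows "GO a (x - c) (y - c) \<le> GO a x y"
proof -
  have "GO a (x - c) (y - c) = phiO a ((y - c) / (x - c))" using cx xy by (intro GO_phi) auto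
  also have "\<dots> \<le> phiO a (y / x)" using ratio_le[OF c0 cx xy] by (intro phiO_mono[OF a0 a1])
  also have "\<dots> = GO a x y" using cx c0 xy by (intro GO_phi[symmetric]) auto
  finally show ?thesis .
qed

lemma GO_shift:
  fixes a c x y :: real
  assumes a0: "0 < a" and a1: "a < 1" and c0: "0 < c" and cx: "c < x" and cy: "c < y"
  shows "GO a (x - c) (y - c) \<le> GO a x y"
proof (cases "x \<le> y")
  case True then show ?thesis using GO_shift1[OF a0 a1 c0 cx] by blast
next
  case False then show ?thesis using GO_shift1[OF a0 a1 c0 cy, of x] GO_sym[of a] by simp
qed

lemma GS_diag: "0 < z \<Longrightarrow> GS a z z = 2"
  for a z :: real unfolding GS_def by (simp add: xa)

lemma GS_shift1:
  fixes a c x y :: real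
  assumes a0: "0 < a" and a1: "a < 1" and c0: "0 < c" and cx: "c < x" and xy: "x \<le> y"
  shows "GS a (x - c) (y - c) \<le> GS a x y"
proof (cases "x = y")
  case True then show ?thesis using cx c0 GS_diag[of x a] GS_diag[of "x-c" a] by simp
next
  case False
  with xy have xy': "x < y" by simp
  have "GS a (x - c) (y - c) = phiS a ((y - c) / (x - c))" using cx xy by (intro GS_phi) auto
  also have "\<dots> \<le> phiS a (y / x)" using ratio_le[OF c0 cx xy] xy' cx c0
    by (intro phiS_mono[OF a0 a1]) (simp_all add: field_simps)
  also have "\<dots> = GS a x y" using cx c0 xy by (intro GS_phi[symmetric]) auto
  finally show ?thesis .
qed

lemma GS_shift:
  fixes a c x y :: real
  assumes a0: "0 < a" and a1: "a < 1" and c0: "0 < c" and cx: "c < x" and cy: "c < y"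
  shows "GS a (x - c) (y - c) \<le> GS a x y"
proof (cases "x \<le> y")
  case True then show ?thesis using GS_shift1[OF a0 a1 c0 cx] by blast
next
  case False then show ?thesis using GS_shift1[OF a0 a1 c0 cy, of x] GS_sym[of a] by simp
qed

lemma cov_scale:
  "cov M (\<lambda>x. k * f x / m) (\<lambda>x. l * g x / n) = (k / m) * (l / n) * cov M f g"
proof -
  have e1: "(\<lambda>x. k * f x / m) = (\<lambda>x. (k / m) * f x)" by (simp add: fun_eq_iff)
  have e2: "(\<lambda>x. l * g x / n) = (\<lambda>x. (l / n) * g x)" by (simp add: fun_eq_iff)
  have "cov M (\<lambda>x. (k / m) * f x) (\<lambda>x. (l / n) * g x)
      = (\<integral>x. ((k / m) * (l / n)) * ((f x - (\<integral>y. f y \<partial>M)) * (g x - (\<integral>y. g y \<partial>M))) \<partial>M)"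
    unfolding cov_def by (simp add: algebra_simps)
  also have "\<dots> = (k / m) * (l / n) * cov M f g"
    unfolding cov_def by (rule integral_mult_right_zero)
  finally show ?thesis unfolding e1 e2 .
qed

definition FF :: "real \<Rightarrow> real \<Rightarrow> real \<Rightarrow> real" where
  "FF a u v = (\<bar>u\<bar> powr a + \<bar>v\<bar> powr a - \<bar>u - v\<bar> powr a) / (\<bar>u\<bar> powr (a/2) * \<bar>v\<bar> powr (a/2))"

lemma FF_shift:
  fixes a c t s :: real
  assumes a0: "0 < a" and a1: "a < 1" and c0: "0 < c" and ct: "c < \<bar>t\<bar>" and cs: "c < \<bar>s\<bar>"
  shows "FF a (t - c * sgn t) (s - c * sgn s) \<le> FF a t s"
proof (cases "t > 0")
  case tp: True
  show ?thesis
  proof (cases "s > 0")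
    case True
    have "FF a (t - c * sgn t) (s - c * sgn s) = GS a (t - c) (s - c)"
      unfolding FF_def GS_def using tp True ct cs by simp
    moreover have "FF a t s = GS a t s" unfolding FF_def GS_def using tp True by simp
    ultimately show ?thesis using GS_shift[OF a0 a1 c0, of t s] ct cs tp True by simp
  next
    case False
    then have sn: "s < 0" using cs c0 by auto
    have e: "\<bar>t - c - (s + c)\<bar> = (t - c) + (- s - c)" using tp sn ct cs by simp
    have "FF a (t - c * sgn t) (s - c * sgn s) = GO a (t - c) (- s - c)"
      unfolding FF_def GO_def using tp sn ct cs e by simp
    moreover have "FF a t s = GO a t (- s)" unfolding FF_def GO_def using tp sn by simp
    ultimately show ?thesis using GO_shift[OF a0 a1 c0, of t "- s"] ct cs tp sn by simp
  qed
next
  case False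
  then have tn: "t < 0" using ct c0 by auto
  show ?thesis
  proof (cases "s > 0")
    case True
    have e: "\<bar>t + c - (s - c)\<bar> = (- t - c) + (s - c)" using tn True ct cs by simp
    have "FF a (t - c * sgn t) (s - c * sgn s) = GO a (- t - c) (s - c)"
      unfolding FF_def GO_def using tn True ct cs e by simp
    moreover have "FF a t s = GO a (- t) s" unfolding FF_def GO_def using tn True by simp
    ultimately show ?thesis using GO_shift[OF a0 a1 c0, of "- t" s] ct cs tn True by simp
  next
    case False
    then have sn: "s < 0" using cs c0 by auto
    have e: "\<bar>t + c - (s + c)\<bar> = \<bar>(- t - c) - (- s - c)\<bar>" by simp
    have "FF a (t - c * sgn t) (s - c * sgn s) = GS a (- t - c) (- s - c)"
      unfolding FF_def GS_def using tn sn ct cs e by simp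
    moreover have "FF a t s = GS a (- t) (- s)" unfolding FF_def GS_def using tn sn
      by (simp add: abs_minus_commute)
    ultimately show ?thesis using GS_shift[OF a0 a1 c0, of "- t" "- s"] ct cs tn sn by simp
  qed
qed

lemma absge:
  fixes \<delta> t :: real
  assumes "0 < \<delta>" "t \<in> {\<delta> * of_int k | k. True}" "t \<noteq> 0"
  shows "\<delta> / 2 < \<bar>t\<bar>"
proof -
  obtain k :: int where t: "t = \<delta> * of_int k" using assms(2) by auto
  have "k \<noteq> 0" using assms(3) t by auto
  then have "1 \<le> \<bar>real_of_int k\<bar>" by linarith
  then have "\<delta> * 1 \<le> \<delta> * \<bar>real_of_int k\<bar>" using assms(1) by (intro mult_left_mono) auto
  then show ?thesis using t assms(1) by (simp add: abs_mult)
qed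

theorem mainTheorem7:
  fixes M :: "'a measure" and B :: "real \<Rightarrow> 'a \<Rightarrow> real" and \<alpha> \<delta> t s :: real
  assumes "is_fBm M \<alpha> B"
    and "0 < \<alpha>" "\<alpha> < 1" "0 < \<delta>"
    and "t \<in> {\<delta> * of_int k | k. True}" "t \<noteq> 0"
    and "s \<in> {\<delta> * of_int k | k. True}" "s \<noteq> 0"
  shows "let t' = t - \<delta> / 2 * sgn t; s' = s - \<delta> / 2 * sgn s in
    cov M (\<lambda>x. sqrt 2 * B t' x / \<bar>t'\<bar> powr (\<alpha> / 2)) (\<lambda>x. sqrt 2 * B s' x / \<bar>s'\<bar> powr (\<alpha> / 2))
    \<le> cov M (\<lambda>x. sqrt 2 * B t x / \<bar>t\<bar> powr (\<alpha> / 2)) (\<lambda>x. sqrt 2 * B s x / \<bar>s\<bar> powr (\<alpha> / 2))"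
proof -
  have cf: "cov M (B u) (B v) = (\<bar>u\<bar> powr \<alpha> + \<bar>v\<bar> powr \<alpha> - \<bar>u - v\<bar> powr \<alpha>) / 2" for u v
    using assms(1) unfolding is_fBm_def by blast
  have cv: "cov M (\<lambda>x. sqrt 2 * B u x / \<bar>u\<bar> powr (\<alpha> / 2)) (\<lambda>x. sqrt 2 * B v x / \<bar>v\<bar> powr (\<alpha> / 2))
      = FF \<alpha> u v" for u v
  proof -
    have g: "(x::real) / 2 * (sqrt 2 / m * (sqrt 2 / n)) = x / (m * n)" for x m n
      by (simp add: field_simps)
    have h2: "(2*x + 2*y - 2*z) / (2*(p::real)) = (x+y-z)/p" for x y z p
    proof -
      have "2*x + 2*y - 2*z = 2*(x+y-z)" by simp
      then show ?thesis by (metis mult_divide_mult_cancel_left zero_neq_numeral)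
    qed
    have g2: "sqrt 2 / m * (sqrt 2 / n) * (x / 2) = x / (m * n)" for x m n :: real
    proof -
      have "sqrt 2 / m * (sqrt 2 / n) * (x / 2) = (sqrt 2 * sqrt 2) * x / (2 * (m * n))"
        by (simp add: ac_simps)
      also have "\<dots> = 2 * x / (2 * (m * n))" by simp
      also have "\<dots> = x / (m * n)" by (rule mult_divide_mult_cancel_left) simp
      finally show ?thesis .
    qed
    show ?thesis unfolding cov_scale cf FF_def by (rule g2)
  qed
  have ct: "\<delta> / 2 < \<bar>t\<bar>" by (rule absge[OF assms(4,5,6)])
  have cs: "\<delta> / 2 < \<bar>s\<bar>" by (rule absge[OF assms(4,7,8)])
  show ?thesis unfolding Let_def cv
    using FF_shift[OF assms(2,3), of "\<delta> / 2" t s] assms(4) ct cs by simp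
qed

end
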